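(* $$\int_{0}^{1}\frac{\log(1-x^2)\,\log(\log x)}{x\sqrt{\log x}}\,dx=\sqrt{\frac{\pi}{2}}\left(i\,\zeta'\!\left(\tfrac32\right)-i\,\zeta\!\left(\tfrac32\right)\big(\gamma-i\pi+\log 8\big)\right),$$ where $\gamma$ is Euler's constant and $\zeta$ the Riemann zeta function.
   Context: For $x\in(0,1)$, $\log(\log x)=\log|\log x|+i\pi$ and $\sqrt{\log x}=e^{\frac12\log(\log x)}=i\sqrt{|\log x|}$ (principal branches). *)

theory Defs
  imports "HOL-Analysis.Analysis"
begin

text \<open>Riemann zeta function via its Dirichlet series, valid (and used only) on the
  half-plane Re s > 1, which is an open neighbourhood of 3/2; hence its complex
  derivative there is the true derivative of the Riemann zeta function.\<close>
definition riemann_zeta :: "complex \<Rightarrow> complex" where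
  "riemann_zeta s = (\<Sum>n. 1 / (of_nat (Suc n)) powr s)"

end

theory Submission
  imports Defs
begin


lemma ln_abs_bound:
  fixes t :: real assumes "t > 0"
  shows "\<bar>ln t\<bar> \<le> 8 * t powr (1/8) + 8 * t powr (-1/8)"
proof -
  have A: "y \<le> exp y" for y :: real using exp_ge_add_one_self[of y] by linarith
  show ?thesis
  proof (cases "ln t \<ge> 0")
    case True
    have "ln t / 8 \<le> exp (ln t / 8)" by (rule A)
    also have "exp (ln t / 8) = t powr (1/8)" using assms by (simp add: powr_def)
    finally show ?thesis using True powr_ge_zero[of t "-1/8"] abs_of_nonneg[OF True] by linarith
  next
    case False
    have "- ln t / 8 \<le> exp (- ln t / 8)" by (rule A)
    also have "exp (- ln t / 8) = t powr (-1/8)" using assms by (simp add: powr_def)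
    finally show ?thesis using False powr_ge_zero[of t "1/8"] abs_of_neg[of "ln t"] by linarith
  qed
qed

lemma scale_integral:
  fixes f :: "real \<Rightarrow> 'a::euclidean_space"
  assumes f: "f absolutely_integrable_on {0<..}" "integral {0<..} f = I" and c: "c > 0"
  shows "(\<lambda>t. f (c*t)) absolutely_integrable_on {0<..}" "integral {0<..} (\<lambda>t. f (c*t)) = I /\<^sub>R c"
proof -
  have img: "(\<lambda>t. c*t) ` {0<..} = ({0<..} :: real set)"
  proof safe
    fix x :: real assume "x > 0" thus "x \<in> (\<lambda>t. c*t) ` {0<..}"
      using c by (intro image_eqI[of _ _ "x/c"]) auto
  qed (use c in auto)
  have "(\<lambda>x. \<bar>c\<bar> *\<^sub>R f (c*x)) absolutely_integrable_on {0<..} \<and> integral {0<..} (\<lambda>x. \<bar>c\<bar> *\<^sub>R f (c*x)) = I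
          \<longleftrightarrow> f absolutely_integrable_on (\<lambda>t. c*t) ` {0<..} \<and> integral ((\<lambda>t. c*t) ` {0<..}) f = I"
    by (rule has_absolute_integral_change_of_variables_real)
       (use c in \<open>auto intro!: derivative_eq_intros inj_onI\<close>)
  with f img c have 1: "(\<lambda>x. c *\<^sub>R f (c*x)) absolutely_integrable_on {0<..}"
     and 2: "integral {0<..} (\<lambda>x. c *\<^sub>R f (c*x)) = I" by auto
  have "(\<lambda>x. (1/c) *\<^sub>R (c *\<^sub>R f (c*x))) absolutely_integrable_on {0<..}"
    using 1 by (rule absolutely_integrable_scaleR_left)
  thus "(\<lambda>t. f (c*t)) absolutely_integrable_on {0<..}" using c by simp
  have 3: "c *\<^sub>R integral {0<..} (\<lambda>x. f (c*x)) = I" using 2 by simp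
  hence "(1/c) *\<^sub>R (c *\<^sub>R integral {0<..} (\<lambda>x. f (c*x))) = (1/c) *\<^sub>R I" by simp
  thus "integral {0<..} (\<lambda>t. f (c*t)) = I /\<^sub>R c" using c by (simp add: divide_inverse_commute)
qed

lemma gamma_scaled:
  fixes s c :: real assumes s: "s > 0" and c: "c > 0"
  shows "(\<lambda>t. t powr (s-1) * exp (-(c*t))) absolutely_integrable_on {0<..}"
        "integral {0<..} (\<lambda>t. t powr (s-1) * exp (-(c*t))) = Gamma s * c powr (-s)"
proof -
  have g0: "((\<lambda>t. t powr (s-1) / exp t) has_integral Gamma s) {0..}"
    using Gamma_integral_real[OF s] .
  have g: "((\<lambda>t. t powr (s-1) / exp t) has_integral Gamma s) {0<..}"
    by (rule has_integral_spike_set_eq[THEN iffD1, OF _ _ g0])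
       (auto intro: negligible_subset[of "{0}"])
  have ai: "(\<lambda>t. t powr (s-1) / exp t) absolutely_integrable_on {0<..}"
    by (rule nonnegative_absolutely_integrable_1) (use g in \<open>auto simp: integrable_on_def\<close>)
  have sc1: "(\<lambda>t. (c*t) powr (s-1) / exp (c*t)) absolutely_integrable_on {0<..}"
    and sc2: "integral {0<..} (\<lambda>t. (c*t) powr (s-1) / exp (c*t)) = Gamma s /\<^sub>R c"
    using scale_integral[OF ai integral_unique[OF g] c] by auto
  have eq: "t powr (s-1) * exp (-(c*t)) = c powr (1-s) * ((c*t) powr (s-1) / exp (c*t))" if "t > 0" for t
    using that c by (simp add: powr_mult powr_diff exp_minus field_simps)
  have "(\<lambda>t. c powr (1-s) * ((c*t) powr (s-1) / exp (c*t))) absolutely_integrable_on {0<..}"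
    using sc1 by (rule set_integrable_mult_right)
  thus "(\<lambda>t. t powr (s-1) * exp (-(c*t))) absolutely_integrable_on {0<..}"
    by (rule absolutely_integrable_spike[OF _ negligible_empty]) (simp add: eq)
  have "integral {0<..} (\<lambda>t. t powr (s-1) * exp (-(c*t))) = integral {0<..} (\<lambda>t. c powr (1-s) * ((c*t) powr (s-1) / exp (c*t)))"
    by (rule integral_cong) (auto simp: eq)
  also have "\<dots> = c powr (1-s) * integral {0<..} (\<lambda>t. (c*t) powr (s-1) / exp (c*t))"
    by (rule integral_mult_right)
  also have "\<dots> = c powr (1-s) * (Gamma s / c)" unfolding sc2 by (simp add: field_simps)
  also have "\<dots> = Gamma s * c powr (-s)" using c by (simp add: powr_diff powr_minus field_simps)
  finally show "integral {0<..} (\<lambda>t. t powr (s-1) * exp (-(c*t))) = Gamma s * c powr (-s)" .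
qed

lemma gamma_pow:
  fixes a c :: real assumes a: "a > -1" and c: "c > 0"
  shows "(\<lambda>t. t powr a * exp (-(c*t))) absolutely_integrable_on {0<..}"
        "((\<lambda>t. t powr a * exp (-(c*t))) has_integral Gamma (a+1) * c powr (-(a+1))) {0<..}"
proof -
  have s: "a + 1 > 0" using a by simp
  show ai: "(\<lambda>t. t powr a * exp (-(c*t))) absolutely_integrable_on {0<..}"
    using gamma_scaled(1)[OF s c] by simp
  have "integral {0<..} (\<lambda>t. t powr a * exp (-(c*t))) = Gamma (a+1) * c powr (-(a+1))"
    using gamma_scaled(2)[OF s c] by simp
  with set_lebesgue_integral_eq_integral(1)[OF ai]
  show "((\<lambda>t. t powr a * exp (-(c*t))) has_integral Gamma (a+1) * c powr (-(a+1))) {0<..}"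
    by (metis integrable_integral)
qed

lemma quot_bound:
  fixes t h :: real assumes t: "t > 0" and h: "0 < h" "h \<le> 1/4"
  shows "\<bar>(exp (h * ln t) - 1) / h\<bar> \<le> \<bar>ln t\<bar> * (1 + t powr (1/4))"
proof (cases "ln t \<ge> 0")
  case True
  define x where "x = h * ln t"
  have x0: "x \<ge> 0" using True h by (simp add: x_def)
  have "1 + -x \<le> exp (-x)" by (rule exp_ge_add_one_self)
  hence "exp x * (1 - x) \<le> exp x * exp (-x)" by (intro mult_left_mono) auto
  hence e1: "exp x - 1 \<le> x * exp x" by (simp add: exp_minus algebra_simps)
  have "h * ln t \<le> (1/4) * ln t" using True h by (intro mult_right_mono) auto
  hence "exp x \<le> exp (ln t / 4)" by (simp add: x_def)
  also have "exp (ln t / 4) = t powr (1/4)" using t by (simp add: powr_def)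
  finally have e2: "exp x \<le> t powr (1/4)" .
  have "\<bar>(exp x - 1) / h\<bar> = (exp x - 1) / h" using x0 h by simp
  also have "\<dots> \<le> x * exp x / h" using e1 h by (simp add: divide_right_mono)
  also have "\<dots> = ln t * exp x" using h by (simp add: x_def)
  also have "\<dots> \<le> ln t * t powr (1/4)" using e2 True by (simp add: mult_left_mono)
  also have "\<dots> \<le> \<bar>ln t\<bar> * (1 + t powr (1/4))" using True by (simp add: algebra_simps)
  finally show ?thesis by (simp add: x_def)
next
  case False
  define x where "x = h * ln t"
  have x0: "x \<le> 0" using False h by (simp add: x_def mult_nonneg_nonpos)
  have e1: "1 + x \<le> exp x" by (rule exp_ge_add_one_self)
  have e2: "exp x \<le> 1" using x0 by simp
  have "\<bar>(exp x - 1) / h\<bar> = (1 - exp x) / h" using e2 h by (simp add: abs_div_pos)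
  also have "\<dots> \<le> -x / h" by (intro divide_right_mono) (use e1 h in linarith)+
  also have "\<dots> = \<bar>ln t\<bar>" using h False by (simp add: x_def)
  also have "\<dots> \<le> \<bar>ln t\<bar> * (1 + t powr (1/4))" by (simp add: mult_le_cancel_left1) 
  finally show ?thesis by (simp add: x_def)
qed

definition dom1 :: "real \<Rightarrow> real" where
  "dom1 t = 16 * (t powr (-3/8) * exp (-(1*t))) + 8 * (t powr (-5/8) * exp (-(1*t))) + 8 * (t powr (-1/8) * exp (-(1*t)))"

lemma dom1_int: "dom1 integrable_on {0<..}"
proof -
  have "(\<lambda>t::real. 16 * (t powr (-3/8) * exp (-(1*t))) + 8 * (t powr (-5/8) * exp (-(1*t))) + 8 * (t powr (-1/8) * exp (-(1*t)))) integrable_on {0<..}"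
  proof -
    have i: "(\<lambda>t::real. t powr a * exp (-(1*t))) integrable_on {0<..}" if "a > -1" for a :: real
      using gamma_pow(2)[OF that, of 1] by (auto simp: integrable_on_def)
    show ?thesis
      by (intro integrable_add integrable_on_mult_right i) auto
  qed
  thus ?thesis by (simp add: dom1_def[abs_def])
qed

lemma dom1_bound:
  fixes t :: real assumes t: "t > 0"
  shows "t powr (-1/2) * exp (-t) * (\<bar>ln t\<bar> * (1 + t powr (1/4))) \<le> dom1 t"
proof -
  have "t powr (-1/2) * exp (-t) * (\<bar>ln t\<bar> * (1 + t powr (1/4))) \<le>
        t powr (-1/2) * exp (-t) * ((8 * t powr (1/8) + 8 * t powr (-1/8)) * (1 + t powr (1/4)))"
    using ln_abs_bound[OF t] by (intro mult_left_mono mult_right_mono) auto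
  also have "\<dots> = dom1 t"
    using t by (simp add: dom1_def algebra_simps flip: powr_add)
  finally show ?thesis .
qed

lemma log_gamma_half:
  shows "((\<lambda>t. t powr (-1/2) * exp (-t) * ln t) has_integral sqrt pi * (- euler_mascheroni - 2 * ln 2)) {0<..}"
        "(\<lambda>t::real. t powr (-1/2) * exp (-t) * ln t) absolutely_integrable_on {0<..}"
proof -
  define h :: "nat \<Rightarrow> real" where "h n = 1 / (real n + 4)" for n
  have h0: "h n > 0" "h n \<le> 1/4" for n by (auto simp: h_def field_simps)
  have hlim: "h \<longlonglongrightarrow> 0" unfolding h_def
    by real_asymp
  have hn0: "h n \<noteq> 0" for n by (simp add: h_def)
  have hat: "filterlim h (at 0) sequentially"
    using hlim hn0 by (auto simp: filterlim_at intro!: always_eventually)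
  define f where "f n t = t powr (-1/2) * exp (-t) * ((exp (h n * ln t) - 1) / h n)" for n t
  define y where "y n = (Gamma (1/2 + h n) - Gamma (1/2)) / h n" for n
  have fi: "(f n has_integral y n) {0<..}" for n
  proof -
    have A: "((\<lambda>t. t powr (h n - 1/2) * exp (-(1*t))) has_integral Gamma (1/2 + h n)) {0<..}"
      using gamma_pow(2)[of "h n - 1/2" 1] h0[of n] by (simp add: add.commute)
    have B: "((\<lambda>t::real. t powr (-1/2) * exp (-(1*t))) has_integral Gamma (1/2::real)) {0<..}"
      using gamma_pow(2)[of "-1/2" 1] by simp
    have "((\<lambda>t. (1 / h n) * (t powr (h n - 1/2) * exp (-(1*t)) - t powr (-1/2) * exp (-(1*t))))
            has_integral (1 / h n) * (Gamma (1/2 + h n) - Gamma (1/2))) {0<..}"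
      by (intro has_integral_mult_right has_integral_diff A B)
    hence "(f n has_integral (1 / h n) * (Gamma (1/2 + h n) - Gamma (1/2))) {0<..}"
      by (rule has_integral_spike[OF negligible_empty, rotated])
         (auto simp: f_def powr_def exp_add [symmetric] field_simps)
    thus ?thesis by (simp add: y_def[abs_def])
  qed
  have bnd: "\<forall>t\<in>{0<..}. norm (f n t) \<le> dom1 t" for n
  proof
    fix t :: real assume "t \<in> {0<..}" hence t: "t > 0" by simp
    have "norm (f n t) = t powr (-1/2) * exp (-t) * \<bar>(exp (h n * ln t) - 1) / h n\<bar>"
      by (simp add: f_def abs_mult)
    also have "\<dots> \<le> t powr (-1/2) * exp (-t) * (\<bar>ln t\<bar> * (1 + t powr (1/4)))"
      using quot_bound[OF t h0(1) h0(2)] by (intro mult_left_mono) auto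
    also have "\<dots> \<le> dom1 t" by (rule dom1_bound[OF t])
    finally show "norm (f n t) \<le> dom1 t" .
  qed
  have plim: "\<forall>t\<in>{0<..}. (\<lambda>n. f n t) \<longlonglongrightarrow> t powr (-1/2) * exp (-t) * ln t"
  proof
    fix t :: real assume "t \<in> {0<..}"
    have d: "((\<lambda>u. exp (u * ln t)) has_field_derivative ln t) (at 0)"
      by (auto intro!: derivative_eq_intros)
    hence "((\<lambda>u. (exp (u * ln t) - exp (0 * ln t)) / (u - 0)) \<longlongrightarrow> ln t) (at 0)"
      by (simp add: has_field_derivative_iff)
    hence "((\<lambda>u. (exp (u * ln t) - 1) / u) \<longlongrightarrow> ln t) (at 0)" by simp
    from filterlim_compose[OF this hat]
    have "(\<lambda>n. (exp (h n * ln t) - 1) / h n) \<longlonglongrightarrow> ln t" by simp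
    thus "(\<lambda>n. f n t) \<longlonglongrightarrow> t powr (-1/2) * exp (-t) * ln t"
      unfolding f_def by (intro tendsto_mult_left)
  qed
  have ylim: "y \<longlonglongrightarrow> Gamma (1/2) * Digamma (1/2)"
  proof -
    have "(Gamma has_field_derivative Gamma (1/2) * Digamma (1/2)) (at (1/2 :: real))"
      by (rule has_field_derivative_Gamma) (use nonpos_Ints_nonpos[of "1/2::real"] in auto)
    hence "((\<lambda>u. (Gamma u - Gamma (1/2)) / (u - 1/2)) \<longlongrightarrow> Gamma (1/2) * Digamma (1/2)) (at (1/2 :: real))"
      by (simp add: has_field_derivative_iff)
    moreover have "filterlim (\<lambda>n. 1/2 + h n) (at (1/2)) sequentially"
      using hlim hn0 by (auto simp: filterlim_at intro!: always_eventually tendsto_eq_intros)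
    ultimately have "(\<lambda>n. (Gamma (1/2 + h n) - Gamma (1/2)) / (1/2 + h n - 1/2)) \<longlonglongrightarrow> Gamma (1/2) * Digamma (1/2)"
      by (rule filterlim_compose)
    thus ?thesis by (simp add: y_def[abs_def])
  qed
  have val: "Gamma (1/2) * Digamma (1/2) = sqrt pi * (- euler_mascheroni - 2 * ln 2 :: real)"
    by (simp add: Gamma_one_half_real Digamma_one_half)
  show "((\<lambda>t. t powr (-1/2) * exp (-t) * ln t) has_integral sqrt pi * (- euler_mascheroni - 2 * ln 2)) {0<..}"
    using has_integral_dominated_convergence[OF fi dom1_int bnd plim ylim] val by simp
  show "(\<lambda>t::real. t powr (-1/2) * exp (-t) * ln t) absolutely_integrable_on {0<..}"
  proof (rule measurable_bounded_by_integrable_imp_absolutely_integrable[OF _ _ dom1_int])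
    show "(\<lambda>t::real. t powr (-1/2) * exp (-t) * ln t) \<in> borel_measurable (lebesgue_on {0<..})"
      by (rule continuous_imp_measurable_on_sets_lebesgue) (auto intro!: continuous_intros)
    fix t :: real assume "t \<in> {0<..}" hence t: "t > 0" by simp
    have "norm (t powr (-1/2) * exp (-t) * ln t) \<le> t powr (-1/2) * exp (-t) * (\<bar>ln t\<bar> * (1 + t powr (1/4)))"
      by (simp add: abs_mult, intro mult_left_mono) (auto simp: algebra_simps)
    also have "\<dots> \<le> dom1 t" by (rule dom1_bound[OF t])
    finally show "norm (t powr (-1/2) * exp (-t) * ln t) \<le> dom1 t" .
  qed auto
qed



lemma sqrt_div_powr: "(c::real) > 0 \<Longrightarrow> sqrt c * (X / c) = X * c powr (-1/2)"
proof -
  assume c: "c > 0"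
  have cp: "c powr (-1/2) = 1 / sqrt c"
    using c by (simp add: powr_minus_divide powr_half_sqrt)
  have s: "sqrt c > 0" using c by simp
  have cc: "sqrt c * sqrt c = c" using c by simp
  have "sqrt c * (X / c) = X / sqrt c"
    using s by (subst cc[symmetric]) (simp add: field_simps)
  thus ?thesis unfolding cp by simp
qed
lemma sqrt_divR_powr: "(c::real) > 0 \<Longrightarrow> sqrt c * (X /\<^sub>R c) = X * c powr (-1/2)"
proof -
  assume c: "c > 0"
  have "X /\<^sub>R c = X / c" unfolding real_scaleR_def by (simp add: divide_inverse_commute)
  thus ?thesis using sqrt_div_powr[OF c, of X] by simp
qed

lemma log_gamma_scaled:
  fixes c :: real assumes c: "c > 0"
  shows "(\<lambda>t::real. t powr (-1/2) * exp (-(c*t)) * ln t) absolutely_integrable_on {0<..}"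
        "((\<lambda>t::real. t powr (-1/2) * exp (-(c*t)) * ln t) has_integral
            sqrt pi * (- euler_mascheroni - 2 * ln 2 - ln c) * c powr (-1/2)) {0<..}"
proof -
  define f where "f u = u powr (-1/2) * exp (-u) * ln u - ln c * (u powr (-1/2) * exp (-(1*u)))" for u :: real
  have A: "(\<lambda>u::real. u powr (-1/2) * exp (-(1*u))) absolutely_integrable_on {0<..}"
    using gamma_pow(1)[of "-1/2" 1] by simp
  have A': "((\<lambda>u::real. u powr (-1/2) * exp (-(1*u))) has_integral sqrt pi) {0<..}"
    using gamma_pow(2)[of "-1/2" 1] by (simp add: Gamma_one_half_real)
  have B: "(\<lambda>u::real. ln c * (u powr (-1/2) * exp (-(1*u)))) absolutely_integrable_on {0<..}"
    by (rule set_integrable_mult_right) (rule A)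
  have fi: "f absolutely_integrable_on {0<..}"
    unfolding f_def[abs_def] by (rule set_integral_diff(1)[OF log_gamma_half(2) B])
  have "(f has_integral (sqrt pi * (- euler_mascheroni - 2 * ln 2) - ln c * sqrt pi)) {0<..}"
    unfolding f_def[abs_def]
    by (intro has_integral_diff log_gamma_half(1) has_integral_mult_right A')
  hence fI: "integral {0<..} f = sqrt pi * (- euler_mascheroni - 2 * ln 2 - ln c)"
    by (simp add: integral_unique algebra_simps)
  note sc = scale_integral[OF fi fI c]
  have cp: "c powr (-1/2) = 1 / sqrt c"
    using c by (simp add: powr_minus_divide powr_half_sqrt)
  have eq: "t powr (-1/2) * exp (-(c*t)) * ln t = sqrt c * f (c*t)" if "t > 0" for t :: real
  proof -
    have "(c*t) powr (-1/2) = c powr (-1/2) * t powr (-1/2)"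
      using that c by (simp add: powr_mult)
    hence "sqrt c * (c*t) powr (-1/2) = (sqrt c * (1 / sqrt c)) * t powr (-1/2)"
      by (simp only: cp mult.assoc)
    hence "sqrt c * (c*t) powr (-1/2) = t powr (-1/2)"
      using c by simp
    thus ?thesis using that c by (simp add: f_def ln_mult algebra_simps)
  qed
  have ai: "(\<lambda>t. sqrt c * f (c*t)) absolutely_integrable_on {0<..}"
    by (rule set_integrable_mult_right) (use sc(1) in simp)
  show "(\<lambda>t::real. t powr (-1/2) * exp (-(c*t)) * ln t) absolutely_integrable_on {0<..}"
    by (rule absolutely_integrable_spike[OF ai negligible_empty]) (rule eq, simp)
  have "integral {0<..} (\<lambda>t. sqrt c * f (c*t)) = sqrt c * integral {0<..} (\<lambda>t. f (c*t))"
    by (rule integral_mult_right)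
  also have "\<dots> = sqrt c * ((sqrt pi * (- euler_mascheroni - 2 * ln 2 - ln c)) /\<^sub>R c)"
    by (simp only: sc(2))
  also have "\<dots> = sqrt pi * (- euler_mascheroni - 2 * ln 2 - ln c) * c powr (-1/2)"
    by (rule sqrt_divR_powr[OF c])
  finally have I: "integral {0<..} (\<lambda>t. sqrt c * f (c*t)) = \<dots>" .
  have "((\<lambda>t. sqrt c * f (c*t)) has_integral sqrt pi * (- euler_mascheroni - 2 * ln 2 - ln c) * c powr (-1/2)) {0<..}"
    using integrable_integral[OF set_lebesgue_integral_eq_integral(1)[OF ai]] by (simp only: I)
  thus "((\<lambda>t::real. t powr (-1/2) * exp (-(c*t)) * ln t) has_integral
            sqrt pi * (- euler_mascheroni - 2 * ln 2 - ln c) * c powr (-1/2)) {0<..}"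
    by (rule has_integral_spike[OF negligible_empty, rotated]) (rule eq, simp)
qed



lemma ai_of_real:
  fixes f :: "real \<Rightarrow> real"
  assumes "f absolutely_integrable_on S"
  shows "(\<lambda>t. complex_of_real (f t)) absolutely_integrable_on S"
  using absolutely_integrable_linear[OF assms bounded_linear_of_real] by (simp add: o_def)

definition P :: "real \<Rightarrow> real \<Rightarrow> real" where
  "P c t = t powr (-1/2) * exp (-(c*t))"
definition Q :: "real \<Rightarrow> real \<Rightarrow> real" where
  "Q c t = t powr (-1/2) * exp (-(c*t)) * ln t"
definition psi0 :: real where "psi0 = - euler_mascheroni - 2 * ln 2"

lemma P_int: "c > 0 \<Longrightarrow> P c absolutely_integrable_on {0<..}"
  "c > 0 \<Longrightarrow> (P c has_integral sqrt pi * c powr (-1/2)) {0<..}"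
  using gamma_pow[of "-1/2" c] by (simp_all add: P_def[abs_def] Gamma_one_half_real)

lemma Q_int: "c > 0 \<Longrightarrow> Q c absolutely_integrable_on {0<..}"
  "c > 0 \<Longrightarrow> (Q c has_integral sqrt pi * (psi0 - ln c) * c powr (-1/2)) {0<..}"
  using log_gamma_scaled[of c] by (simp_all add: Q_def[abs_def] psi0_def)

definition a :: "nat \<Rightarrow> real \<Rightarrow> complex" where
  "a k t = \<i> / of_nat (Suc k) * (of_real (Q (2 * of_nat (Suc k)) t) + \<i> * of_real pi * of_real (P (2 * of_nat (Suc k)) t))"

definition A :: "nat \<Rightarrow> complex" where
  "A k = \<i> / of_nat (Suc k) * (of_real (sqrt pi * (psi0 - ln (2 * of_nat (Suc k))) * (2 * of_nat (Suc k)) powr (-1/2))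
          + \<i> * of_real pi * of_real (sqrt pi * (2 * of_nat (Suc k)) powr (-1/2)))"

lemma a_int: "a k absolutely_integrable_on {0<..}" "(a k has_integral A k) {0<..}"
proof -
  define c :: real where "c = 2 * of_nat (Suc k)"
  have c: "c > 0" by (simp add: c_def)
  have "(\<lambda>t. \<i> / of_nat (Suc k) * (of_real (Q c t) + \<i> * of_real pi * of_real (P c t))) absolutely_integrable_on {0<..}"
    by (intro set_integrable_mult_right set_integral_add(1) ai_of_real Q_int P_int c)
  thus "a k absolutely_integrable_on {0<..}" by (simp add: a_def[abs_def] c_def)
  have "((\<lambda>t. \<i> / of_nat (Suc k) * (of_real (Q c t) + \<i> * of_real pi * of_real (P c t))) has_integral A k) {0<..}"
    unfolding A_def c_def[symmetric]
    by (intro has_integral_mult_right has_integral_add has_integral_of_real Q_int P_int c)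
  thus "(a k has_integral A k) {0<..}" by (simp add: a_def[abs_def] c_def)
qed

definition w :: "real \<Rightarrow> complex" where
  "w t = of_real (t powr (-1/2)) * (of_real (ln t) + \<i> * of_real pi)"

definition G :: "real \<Rightarrow> complex" where
  "G t = - \<i> * of_real (ln (1 - exp (-2*t))) * w t"

lemma a_alt: "t > 0 \<Longrightarrow> a k t = - \<i> * of_real (- ((exp (-2*t))^(Suc k)) / of_nat (Suc k)) * w t"
proof -
  assume t: "t > 0"
  have e: "exp (-(2 * real (Suc k) * t)) = exp (-2*t) ^ Suc k"
    by (subst exp_of_nat_mult[symmetric]) (simp add: algebra_simps)
  show ?thesis
    unfolding a_def P_def Q_def w_def e
    by (simp add: algebra_simps)
qed

lemma ln_sums:
  fixes x :: real assumes "0 \<le> x" "x < 1"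
  shows "(\<lambda>k. - (x^(Suc k)) / of_nat (Suc k)) sums ln (1 - x)"
proof -
  have "(\<lambda>n. - ((-(-x))^n) / of_nat n) sums ln (1 + (-x))"
    by (rule ln_series') (use assms in simp)
  hence "(\<lambda>n. - (x^n) / of_nat n) sums ln (1 - x)" by simp
  thus ?thesis by (subst sums_Suc_iff) simp
qed

lemma a_sums: "t > 0 \<Longrightarrow> (\<lambda>k. a k t) sums G t"
proof -
  assume t: "t > 0"
  have x: "0 \<le> exp (-2*t)" "exp (-2*t) < 1" using t by auto
  have "(\<lambda>k. complex_of_real (- ((exp (-2*t))^(Suc k)) / of_nat (Suc k))) sums of_real (ln (1 - exp (-2*t)))"
    by (rule sums_of_real) (rule ln_sums[OF x])
  from sums_mult2[OF sums_mult[OF this, of "-\<i>"], of "w t"]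
  show ?thesis using a_alt[OF t] by (simp add: G_def)
qed

lemma a_norm_summable: "t > 0 \<Longrightarrow> summable (\<lambda>k. norm (a k t))"
proof -
  assume t: "t > 0"
  have x: "0 \<le> exp (-2*t)" "exp (-2*t) < 1" using t by auto
  have "summable (\<lambda>k. - ((exp (-2*t))^(Suc k)) / of_nat (Suc k))"
    using ln_sums[OF x] by (rule sums_summable)
  hence "summable (\<lambda>k. - (- ((exp (-2*t))^(Suc k)) / of_nat (Suc k)))"
    by (rule summable_minus)
  hence "summable (\<lambda>k. ((exp (-2*t))^(Suc k) / of_nat (Suc k)) * norm (w t))"
    by (intro summable_mult2) simp
  moreover have "norm (a k t) = ((exp (-2*t))^(Suc k) / of_nat (Suc k)) * norm (w t)" for k
  proof -
    have "norm (a k t) = \<bar>- ((exp (-2*t))^(Suc k)) / of_nat (Suc k)\<bar> * norm (w t)"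
      unfolding a_alt[OF t] norm_mult norm_minus_cancel norm_ii norm_of_real by simp
    also have "\<bar>- ((exp (-2*t))^(Suc k)) / of_nat (Suc k)\<bar> = (exp (-2*t))^(Suc k) / of_nat (Suc k)"
      by (simp add: abs_divide)
    finally show ?thesis .
  qed
  ultimately show ?thesis by simp
qed

definition Bk :: "nat \<Rightarrow> real \<Rightarrow> real" where
  "Bk k t = 1 / real (Suc k) * (8 * (t powr (-3/8) * exp (-((2 * real (Suc k))*t))) + 8 * (t powr (-5/8) * exp (-((2 * real (Suc k))*t)))
             + 4 * (t powr (-1/2) * exp (-((2 * real (Suc k))*t))))"

definition Kc :: real where "Kc = 8 * Gamma (5/8) + 8 * Gamma (3/8) + 4 * sqrt pi"

lemma a_norm_le:
  assumes t: "t > 0" shows "norm (a k t) \<le> Bk k t"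
proof -
  define c where "c = 2 * real (Suc k)"
  have "norm (a k t) = 1 / real (Suc k) * norm (complex_of_real (Q c t) + \<i> * of_real pi * of_real (P c t))"
    unfolding a_def c_def norm_mult norm_divide norm_ii norm_of_nat by simp
  also have "\<dots> \<le> 1 / real (Suc k) * (\<bar>Q c t\<bar> + pi * P c t)"
  proof (intro mult_left_mono)
    have "norm (complex_of_real (Q c t) + \<i> * of_real pi * of_real (P c t)) \<le> norm (complex_of_real (Q c t)) + norm (\<i> * of_real pi * of_real (P c t))"
      by (rule norm_triangle_ineq)
    also have "\<dots> = \<bar>Q c t\<bar> + pi * P c t"
      using t by (simp add: norm_mult P_def)
    finally show "norm (complex_of_real (Q c t) + \<i> * of_real pi * of_real (P c t)) \<le> \<bar>Q c t\<bar> + pi * P c t" .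
  qed simp
  also have "\<dots> \<le> Bk k t"
  proof -
    have P0: "P c t \<ge> 0" by (simp add: P_def)
    have "\<bar>Q c t\<bar> = P c t * \<bar>ln t\<bar>" using t by (simp add: Q_def P_def abs_mult)
    also have "\<dots> \<le> P c t * (8 * t powr (1/8) + 8 * t powr (-1/8))"
      using ln_abs_bound[OF t] P0 by (intro mult_left_mono) auto
    also have "\<dots> = 8 * (t powr (-3/8) * exp (-(c*t))) + 8 * (t powr (-5/8) * exp (-(c*t)))"
      using t by (simp add: P_def algebra_simps flip: powr_add)
    finally have q: "\<bar>Q c t\<bar> \<le> \<dots>" .
    have p: "pi * P c t \<le> 4 * (t powr (-1/2) * exp (-(c*t)))"
      using P0 pi_less_4 by (simp add: P_def mult_right_mono)
    have "\<bar>Q c t\<bar> + pi * P c t \<le> 8 * (t powr (-3/8) * exp (-(c*t))) + 8 * (t powr (-5/8) * exp (-(c*t))) + 4 * (t powr (-1/2) * exp (-(c*t)))"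
      using q p by linarith
    thus ?thesis unfolding Bk_def c_def[symmetric] by (intro mult_left_mono) auto
  qed
  finally show ?thesis .
qed

lemma Bk_int: "(Bk k has_integral 1 / real (Suc k) * (8 * (Gamma (5/8) * (2 * real (Suc k)) powr (-(5/8))) + 8 * (Gamma (3/8) * (2 * real (Suc k)) powr (-(3/8)))
             + 4 * (Gamma (1/2) * (2 * real (Suc k)) powr (-(1/2))))) {0<..}"
proof -
  define c where "c = 2 * real (Suc k)"
  have c: "c > 0" by (simp add: c_def)
  have 1: "((\<lambda>t. t powr (-3/8) * exp (-(c*t))) has_integral Gamma (5/8) * c powr (-(5/8))) {0<..}"
    using gamma_pow(2)[of "-3/8" c] c by simp
  have 2: "((\<lambda>t. t powr (-5/8) * exp (-(c*t))) has_integral Gamma (3/8) * c powr (-(3/8))) {0<..}"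
    using gamma_pow(2)[of "-5/8" c] c by simp
  have 3: "((\<lambda>t. t powr (-1/2) * exp (-(c*t))) has_integral Gamma (1/2) * c powr (-(1/2))) {0<..}"
    using gamma_pow(2)[of "-1/2" c] c by simp
  show ?thesis unfolding Bk_def[abs_def] c_def[symmetric]
    by (intro has_integral_mult_right has_integral_add 1 2 3)
qed

lemma cpow_le:
  fixes n p :: real assumes n: "n \<ge> 1" and p: "p \<ge> 3/8"
  shows "(2*n) powr (-p) \<le> n powr (-(3/8))"
proof -
  have "(2*n) powr (-p) \<le> (2*n) powr (-(3/8))" using n p by (intro powr_mono) auto
  also have "\<dots> \<le> n powr (-(3/8))" using n by (intro powr_mono2') auto
  finally show ?thesis .
qed

lemma int_norm_a_le: "integral {0<..} (\<lambda>t. norm (a k t)) \<le> Kc * real (Suc k) powr (-(11/8))"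
proof -
  define n where "n = real (Suc k)"
  have n: "n \<ge> 1" by (simp add: n_def)
  have "integral {0<..} (\<lambda>t. norm (a k t)) \<le> integral {0<..} (Bk k)"
  proof (rule integral_le)
    show "(\<lambda>t. norm (a k t)) integrable_on {0<..}"
      using a_int(1)[of k] by (simp add: absolutely_integrable_on_def)
    show "Bk k integrable_on {0<..}" using Bk_int by blast
  qed (simp add: a_norm_le)
  also have "\<dots> = 1 / n * (8 * (Gamma (5/8) * (2 * n) powr (-(5/8))) + 8 * (Gamma (3/8) * (2 * n) powr (-(3/8)))
             + 4 * (Gamma (1/2) * (2 * n) powr (-(1/2))))"
    unfolding n_def by (rule integral_unique[OF Bk_int])
  also have "\<dots> \<le> 1 / n * (8 * (Gamma (5/8) * n powr (-(3/8))) + 8 * (Gamma (3/8) * n powr (-(3/8)))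
             + 4 * (Gamma (1/2) * n powr (-(3/8))))"
  proof -
    have g: "Gamma (x::real) > 0" if "x > 0" for x using Gamma_real_pos_exp[OF that] by simp
    show ?thesis
      using n g[of "5/8"] g[of "3/8"] g[of "1/2"] cpow_le[OF n, of "5/8"] cpow_le[OF n, of "3/8"] cpow_le[OF n, of "1/2"]
      by (intro mult_left_mono add_mono mult_left_mono) auto
  qed
  also have "\<dots> = Kc * (1 / n * n powr (-(3/8)))"
    by (simp add: Kc_def Gamma_one_half_real algebra_simps)
  also have "1 / n * n powr (-(3/8)) = n powr (-(11/8))"
  proof -
    have "n powr (-(11/8)) = n powr (-1 + -(3/8))" by simp
    also have "\<dots> = n powr (-1) * n powr (-(3/8))" by (rule powr_add)
    also have "n powr (-1) = 1 / n" using n by (simp add: powr_neg_one)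
    finally show ?thesis by simp
  qed
  finally show ?thesis by (simp add: n_def)
qed



lemma G_int: "G absolutely_integrable_on {0<..}" "A sums integral {0<..} G"
proof -
  define g where "g = (\<lambda>k t. indicator {0<..} t *\<^sub>R a k t)"
  have int: "integrable lebesgue (g k)" for k
    using a_int(1)[of k] unfolding set_integrable_def g_def .
  have ae: "AE t in lebesgue. summable (\<lambda>k. norm (g k t))"
  proof (rule AE_I2)
    fix t :: real
    show "summable (\<lambda>k. norm (g k t))"
    proof (cases "t > 0")
      case True thus ?thesis using a_norm_summable[OF True] by (simp add: g_def)
    next
      case False thus ?thesis by (simp add: g_def)
    qed
  qed
  have nrm: "(\<integral>t. norm (g k t) \<partial>lebesgue) = integral {0<..} (\<lambda>t. norm (a k t))" for k
  proof -
    have "(\<integral>t. norm (g k t) \<partial>lebesgue) = set_lebesgue_integral lebesgue {0<..} (\<lambda>t. norm (a k t))"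
      unfolding set_lebesgue_integral_def g_def
      by (intro Bochner_Integration.integral_cong) (auto simp: indicator_def)
    also have "\<dots> = integral {0<..} (\<lambda>t. norm (a k t))"
      by (rule set_lebesgue_integral_eq_integral(2)[OF set_integrable_norm[OF a_int(1)]])
    finally show ?thesis .
  qed
  have sK: "summable (\<lambda>k. Kc * real (Suc k) powr (-(11/8)))"
  proof -
    have "summable (\<lambda>n. real n powr (-(11/8)))" by (simp add: summable_real_powr_iff)
    hence "summable (\<lambda>n. real (Suc n) powr (-(11/8)))" by (subst summable_Suc_iff)
    thus ?thesis by (rule summable_mult)
  qed
  have sI: "summable (\<lambda>k. \<integral>t. norm (g k t) \<partial>lebesgue)"
  proof (rule summable_comparison_test[OF _ sK], intro exI allI impI)
    fix k :: nat
    have "0 \<le> integral {0<..} (\<lambda>t. norm (a k t))"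
      by (rule integral_nonneg) (use a_int(1)[of k] in \<open>auto simp: absolutely_integrable_on_def\<close>)
    thus "norm (\<integral>t. norm (g k t) \<partial>lebesgue) \<le> Kc * real (Suc k) powr (-(11/8))"
      using int_norm_a_le[of k] by (simp add: nrm)
  qed
  have sumeq: "(\<lambda>t. \<Sum>k. g k t) = (\<lambda>t. indicator {0<..} t *\<^sub>R G t)"
  proof
    fix t :: real
    show "(\<Sum>k. g k t) = indicator {0<..} t *\<^sub>R G t"
    proof (cases "t > 0")
      case True thus ?thesis using sums_unique[OF a_sums[OF True]] by (simp add: g_def)
    next
      case False thus ?thesis by (simp add: g_def)
    qed
  qed
  have gi: "integrable lebesgue (\<lambda>t. \<Sum>k. g k t)"
    by (rule integrable_suminf[OF int ae sI])
  thus Gi: "G absolutely_integrable_on {0<..}"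
    unfolding set_integrable_def sumeq .
  have "(\<lambda>k. integral\<^sup>L lebesgue (g k)) sums (\<integral>t. (\<Sum>k. g k t) \<partial>lebesgue)"
    by (rule sums_integral[OF int ae sI])
  moreover have "integral\<^sup>L lebesgue (g k) = A k" for k
  proof -
    have "integral\<^sup>L lebesgue (g k) = set_lebesgue_integral lebesgue {0<..} (a k)"
      unfolding set_lebesgue_integral_def g_def ..
    also have "\<dots> = integral {0<..} (a k)"
      by (rule set_lebesgue_integral_eq_integral(2)[OF a_int(1)])
    also have "\<dots> = A k" by (rule integral_unique[OF a_int(2)])
    finally show ?thesis .
  qed
  moreover have "(\<integral>t. (\<Sum>k. g k t) \<partial>lebesgue) = integral {0<..} G"
  proof -
    have "(\<integral>t. (\<Sum>k. g k t) \<partial>lebesgue) = set_lebesgue_integral lebesgue {0<..} G"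
      unfolding set_lebesgue_integral_def sumeq ..
    also have "\<dots> = integral {0<..} G"
      by (rule set_lebesgue_integral_eq_integral(2)[OF Gi])
    finally show ?thesis .
  qed
  ultimately show "A sums integral {0<..} G" by simp
qed



lemma cpow_nat: "(of_nat m :: complex) powr (of_real y) = of_real (real m powr y)"
  using powr_of_real[of "real m" y] by simp

lemma zeta_term: "1 / (of_nat (Suc k)) powr (3/2 :: complex) = complex_of_real (real (Suc k) powr (-(3/2)))"
proof -
  have "(of_nat (Suc k)) powr (3/2 :: complex) = (of_nat (Suc k)) powr (of_real (3/2))" by simp
  also have "\<dots> = of_real (real (Suc k) powr (3/2))" by (rule cpow_nat)
  finally show ?thesis by (simp add: powr_minus_divide)
qed

lemma zeta_sums: "(\<lambda>k. complex_of_real (real (Suc k) powr (-(3/2)))) sums riemann_zeta (3/2)"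
proof -
  note e = zeta_term
  have "summable (\<lambda>n. real n powr (-(3/2)))" by (simp add: summable_real_powr_iff)
  hence "summable (\<lambda>n. real (Suc n) powr (-(3/2)))" by (subst summable_Suc_iff)
  hence "summable (\<lambda>k. complex_of_real (real (Suc k) powr (-(3/2))))"
    by (rule summable_of_real)
  hence "(\<lambda>k. complex_of_real (real (Suc k) powr (-(3/2)))) sums (\<Sum>k. complex_of_real (real (Suc k) powr (-(3/2))))"
    by (rule summable_sums)
  thus ?thesis unfolding riemann_zeta_def e .
qed

lemma ln_le_16: "(m::real) \<ge> 1 \<Longrightarrow> ln m \<le> 16 * m powr (1/8)"
proof -
  assume m: "m \<ge> 1"
  have "\<bar>ln m\<bar> \<le> 8 * m powr (1/8) + 8 * m powr (-1/8)" using ln_abs_bound[of m] m by simp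
  moreover have "m powr (-1/8) \<le> m powr (1/8)" using m by (intro powr_mono) auto
  ultimately show ?thesis by linarith
qed

lemma zeta_deriv_sums:
  "(\<lambda>k. complex_of_real (- ln (real (Suc k)) * real (Suc k) powr (-(3/2)))) sums deriv riemann_zeta (3/2)"
proof -
  define f where "f n s = 1 / (of_nat (Suc n)) powr s" for n and s :: complex
  define f' where "f' n s = - Ln (of_nat (Suc n)) / (of_nat (Suc n)) powr s" for n and s :: complex
  define S where "S = cball (3/2 :: complex) (1/4)"
  have der: "(f n has_field_derivative f' n s) (at s within S)" for n s
  proof -
    have nz: "(of_nat (Suc n) :: complex) powr s \<noteq> 0"
      by (metis of_nat_eq_0_iff nat.distinct(1) powr_eq_0_iff)
    have d1: "((\<lambda>s. (of_nat (Suc n)::complex) powr s) has_field_derivative Ln (of_nat (Suc n)) * of_nat (Suc n) powr s) (at s within S)"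
      by (rule has_field_derivative_at_within[OF has_field_derivative_powr_right]) (metis of_nat_eq_0_iff nat.distinct(1))
    have d2: "((\<lambda>s. 1 / (of_nat (Suc n)::complex) powr s) has_field_derivative
               (0 * (of_nat (Suc n)::complex) powr s - 1 * (Ln (of_nat (Suc n)) * of_nat (Suc n) powr s)) / ((of_nat (Suc n)::complex) powr s * (of_nat (Suc n)::complex) powr s)) (at s within S)"
      by (rule DERIV_divide[OF DERIV_const d1 nz])
    moreover have "(0 * (of_nat (Suc n)::complex) powr s - 1 * (Ln (of_nat (Suc n)) * of_nat (Suc n) powr s)) / ((of_nat (Suc n)::complex) powr s * (of_nat (Suc n)::complex) powr s) = f' n s"
      unfolding f'_def using nz by (simp add: divide_simps)
    ultimately show ?thesis unfolding f_def[abs_def] by simp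
  qed
  have bnd: "norm (f' n s) \<le> 16 * real (Suc n) powr (-(9/8))" if "s \<in> S" for n s
  proof -
    define m where "m = real (Suc n)"
    have m: "m \<ge> 1" by (simp add: m_def)
    have "\<bar>Re s - 3/2\<bar> \<le> 1/4"
      using that abs_Re_le_cmod[of "s - 3/2"] by (simp add: S_def dist_norm norm_minus_commute)
    hence re: "Re s \<ge> 5/4" by linarith
    have np: "norm ((of_nat (Suc n) :: complex) powr s) = m powr Re s"
      using norm_powr_real_powr[of "of_nat (Suc n)" s] by (simp add: m_def)
    have "norm (f' n s) = ln m / m powr Re s"
      unfolding f'_def norm_divide norm_minus_cancel np by (simp add: m_def)
    also have "\<dots> \<le> ln m / m powr (5/4)"
      using m re by (intro divide_left_mono powr_mono) auto
    also have "\<dots> \<le> 16 * m powr (1/8) / m powr (5/4)"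
      using m ln_le_16[OF m] by (intro divide_right_mono) auto
    also have "\<dots> = 16 * m powr (-(9/8))"
    proof -
      have "m powr (1/8 - 5/4) = m powr (1/8) / m powr (5/4)" by (rule powr_diff)
      moreover have "(1/8 - 5/4 :: real) = -(9/8)" by simp
      ultimately show ?thesis by simp
    qed
    finally show ?thesis by (simp add: m_def)
  qed
  have sM: "summable (\<lambda>n. 16 * real (Suc n) powr (-(9/8)))"
  proof -
    have "summable (\<lambda>n. real n powr (-(9/8)))" by (simp add: summable_real_powr_iff)
    hence "summable (\<lambda>n. real (Suc n) powr (-(9/8)))" by (subst summable_Suc_iff)
    thus ?thesis by (rule summable_mult)
  qed
  have uc: "uniformly_convergent_on S (\<lambda>n s. \<Sum>i<n. f' i s)"
    by (rule Weierstrass_m_test'[OF bnd sM])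
  have in0: "3/2 \<in> S" by (simp add: S_def)
  have int: "3/2 \<in> interior S" by (simp add: S_def)
  have s0: "summable (\<lambda>n. f n (3/2))"
  proof -
    have "(\<lambda>n. f n (3/2)) = (\<lambda>k. complex_of_real (real (Suc k) powr (-(3/2))))"
      by (rule ext) (simp only: f_def zeta_term)
    thus ?thesis using sums_summable[OF zeta_sums] by simp
  qed
  have hs: "((\<lambda>x. \<Sum>n. f n x) has_field_derivative (\<Sum>n. f' n (3/2))) (at (3/2))"
    by (rule has_field_derivative_series'(2)[OF convex_cball[of "3/2" "1/4"] der[unfolded S_def] uc[unfolded S_def] in0[unfolded S_def] s0 int[unfolded S_def]])
  have "(\<lambda>x. \<Sum>n. f n x) = riemann_zeta" by (simp add: fun_eq_iff f_def riemann_zeta_def)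
  hence d: "deriv riemann_zeta (3/2) = (\<Sum>n. f' n (3/2))" using hs by (metis DERIV_imp_deriv)
  have fe: "f' n (3/2) = complex_of_real (- ln (real (Suc n)) * real (Suc n) powr (-(3/2)))" for n
  proof -
    have "f' n (3/2) = - Ln (of_nat (Suc n)) * (1 / (of_nat (Suc n)) powr (3/2 :: complex))"
      by (simp add: f'_def)
    also have "\<dots> = - of_real (ln (real (Suc n))) * complex_of_real (real (Suc n) powr (-(3/2)))"
      unfolding zeta_term by (subst Ln_of_nat) auto
    finally show ?thesis by simp
  qed
  have "summable (\<lambda>n. f' n (3/2))"
    by (rule summable_comparison_test[OF _ sM]) (use bnd in0 in auto)
  hence "(\<lambda>n. f' n (3/2)) sums deriv riemann_zeta (3/2)" unfolding d by (rule summable_sums)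
  thus ?thesis by (simp add: fe)
qed



lemma u_eq:
  fixes n :: real assumes n: "n > 0"
  shows "sqrt pi * (2*n) powr (-1/2) / n = sqrt (pi/2) * n powr (-(3/2))"
proof -
  have a: "(2*n) powr (-1/2) = 2 powr (-1/2) * n powr (-1/2)" using n by (simp add: powr_mult)
  have b: "(2::real) powr (-1/2) = 1 / sqrt 2" by (simp add: powr_minus_divide powr_half_sqrt)
  have c: "n powr (-1/2) / n = n powr (-(3/2))"
  proof -
    have "n powr (-1/2 - 1) = n powr (-1/2) / n powr 1" by (rule powr_diff)
    moreover have "(-1/2 - 1 :: real) = -(3/2)" by simp
    ultimately show ?thesis using n by simp
  qed
  have d: "sqrt pi * (1 / sqrt 2) = sqrt (pi/2)" by (simp add: real_sqrt_divide)
  have "sqrt pi * (2*n) powr (-1/2) / n = (sqrt pi * (1 / sqrt 2)) * (n powr (-1/2) / n)"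
    unfolding a b by simp
  thus ?thesis unfolding c d .
qed

definition target :: complex where
  "target = complex_of_real (sqrt (pi / 2)) *
            (\<i> * deriv riemann_zeta (3/2)
             - \<i> * riemann_zeta (3/2) *
               (complex_of_real euler_mascheroni - \<i> * complex_of_real pi + complex_of_real (ln 8)))"

lemma A_eq: "A k = complex_of_real (sqrt (pi/2)) *
     (\<i> * complex_of_real (- ln (real (Suc k)) * real (Suc k) powr (-(3/2)))
      - \<i> * complex_of_real (real (Suc k) powr (-(3/2))) *
        (complex_of_real euler_mascheroni - \<i> * complex_of_real pi + complex_of_real (ln 8)))"
proof -
  define n where "n = real (Suc k)"
  have n: "n > 0" by (simp add: n_def)
  define u where "u = sqrt pi * (2*n) powr (-1/2) / n"
  define z where "z = n powr (-(3/2))"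
  have uz: "u = sqrt (pi/2) * z" unfolding u_def z_def by (rule u_eq[OF n])
  have l8: "ln (8::real) = 3 * ln 2" using ln_realpow[of 2 3] by simp
  have l2n: "ln (2*n) = ln 2 + ln n" using n by (simp add: ln_mult)
  have ps: "psi0 - ln (2*n) = - euler_mascheroni - ln 8 - ln n"
    unfolding psi0_def l8 l2n by simp
  have cn: "complex_of_nat (Suc k) = complex_of_real n" by (simp add: n_def)
  have "A k = \<i> * complex_of_real u * (complex_of_real (psi0 - ln (2*n)) + \<i> * complex_of_real pi)"
  proof -
    have nz: "complex_of_real n \<noteq> 0" using n by simp
    show ?thesis unfolding A_def cn n_def[symmetric] u_def
      using nz by (simp add: field_simps)
  qed
  also have "\<dots> = \<i> * complex_of_real (sqrt (pi/2) * z) * (complex_of_real (- euler_mascheroni - ln 8 - ln n) + \<i> * complex_of_real pi)"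
    unfolding uz ps ..
  also have "\<dots> = complex_of_real (sqrt (pi/2)) *
     (\<i> * complex_of_real (- ln n * z)
      - \<i> * complex_of_real z *
        (complex_of_real euler_mascheroni - \<i> * complex_of_real pi + complex_of_real (ln 8)))"
    by (simp add: algebra_simps)
  finally show ?thesis unfolding z_def n_def .
qed

lemma integral_G: "integral {0<..} G = target"
proof -
  have "A sums target"
  proof -
    have "(\<lambda>k. complex_of_real (sqrt (pi/2)) *
     (\<i> * complex_of_real (- ln (real (Suc k)) * real (Suc k) powr (-(3/2)))
      - \<i> * complex_of_real (real (Suc k) powr (-(3/2))) *
        (complex_of_real euler_mascheroni - \<i> * complex_of_real pi + complex_of_real (ln 8)))) sums target"
      unfolding target_def
      by (intro sums_mult sums_diff sums_mult2 zeta_sums zeta_deriv_sums)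
    moreover have "A = (\<lambda>k. complex_of_real (sqrt (pi/2)) *
     (\<i> * complex_of_real (- ln (real (Suc k)) * real (Suc k) powr (-(3/2)))
      - \<i> * complex_of_real (real (Suc k) powr (-(3/2))) *
        (complex_of_real euler_mascheroni - \<i> * complex_of_real pi + complex_of_real (ln 8))))"
      by (rule ext) (rule A_eq)
    ultimately show ?thesis by simp
  qed
  thus ?thesis using G_int(2) sums_unique2 by blast
qed



lemma exp_i_pi_half: "exp (\<i> * complex_of_real pi / 2) = \<i>"
proof -
  have "exp (\<i> * complex_of_real (pi/2)) = cis (pi/2)" by (simp add: cis_conv_exp)
  thus ?thesis by simp
qed

lemma pointwise:
  fixes t :: real assumes t: "t > 0"
  shows "\<bar>- exp (-t)\<bar> *\<^sub>R (complex_of_real (ln (1 - (exp (-t))\<^sup>2)) * Ln (complex_of_real (ln (exp (-t))))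
            / (complex_of_real (exp (-t)) * exp (Ln (complex_of_real (ln (exp (-t)))) / 2))) = G t"
proof -
  have L: "Ln (complex_of_real (ln (exp (-t)))) = complex_of_real (ln t) + \<i> * complex_of_real pi"
    using Ln_of_real'[of "-t"] t by (simp add: mult.commute)
  have E: "exp ((complex_of_real (ln t) + \<i> * complex_of_real pi) / 2) = complex_of_real (sqrt t) * \<i>"
  proof -
    have "exp ((complex_of_real (ln t) + \<i> * complex_of_real pi) / 2)
          = exp (complex_of_real (ln t / 2)) * exp (\<i> * complex_of_real pi / 2)"
      by (simp add: exp_add[symmetric] add_divide_distrib)
    also have "exp (complex_of_real (ln t / 2)) = complex_of_real (sqrt t)"
    proof -
      have "exp (ln t / 2) = sqrt t" using t by (simp add: powr_half_sqrt[symmetric] powr_def)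
      moreover have "exp (complex_of_real (ln t / 2)) = complex_of_real (exp (ln t / 2))" by (rule exp_of_real)
      ultimately show ?thesis by simp
    qed
    finally show ?thesis by (simp add: exp_i_pi_half)
  qed
  have sq: "(exp (-t))\<^sup>2 = exp (-2*t)" by (simp add: power2_eq_square exp_add[symmetric])
  have pw: "t powr (-1/2) = 1 / sqrt t" using t by (simp add: powr_minus_divide powr_half_sqrt)
  have st: "sqrt t > 0" using t by simp
  have ne: "complex_of_real (sqrt t) \<noteq> 0" "complex_of_real (exp (-t)) \<noteq> 0" using st by auto
  show ?thesis
    unfolding L E sq G_def w_def pw
    using ne by (simp add: field_simps scaleR_conv_of_real)
qed

lemma img: "(\<lambda>t::real. exp (-t)) ` {0<..} = {0<..<1}"
proof (rule set_eqI, rule iffI)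
  fix x :: real assume "x \<in> (\<lambda>t. exp (-t)) ` {0<..}" thus "x \<in> {0<..<1}" by auto
next
  fix x :: real assume "x \<in> {0<..<1}"
  thus "x \<in> (\<lambda>t. exp (-t)) ` {0<..}"
    by (intro image_eqI[of _ _ "- ln x"]) auto
qed

theorem mainTheorem16:
  shows "((\<lambda>x::real. complex_of_real (ln (1 - x\<^sup>2)) * Ln (complex_of_real (ln x))
            / (complex_of_real x * exp (Ln (complex_of_real (ln x)) / 2)))
         has_integral
          (complex_of_real (sqrt (pi / 2)) *
            (\<i> * deriv riemann_zeta (3/2)
             - \<i> * riemann_zeta (3/2) *
               (complex_of_real euler_mascheroni - \<i> * complex_of_real pi + complex_of_real (ln 8)))))
         {0<..<1}"
proof -
  define F where "F = (\<lambda>x::real. complex_of_real (ln (1 - x\<^sup>2)) * Ln (complex_of_real (ln x))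
            / (complex_of_real x * exp (Ln (complex_of_real (ln x)) / 2)))"
  have cov: "(\<lambda>t. \<bar>- exp (-t)\<bar> *\<^sub>R F (exp (-t))) absolutely_integrable_on {0<..} \<and>
             integral {0<..} (\<lambda>t. \<bar>- exp (-t)\<bar> *\<^sub>R F (exp (-t))) = target
         \<longleftrightarrow> F absolutely_integrable_on (\<lambda>t. exp (-t)) ` {0<..} \<and> integral ((\<lambda>t. exp (-t)) ` {0<..}) F = target"
    by (rule has_absolute_integral_change_of_variables_real)
       (auto intro!: derivative_eq_intros inj_onI)
  have eqG: "(\<lambda>t. \<bar>- exp (-t)\<bar> *\<^sub>R F (exp (-t))) absolutely_integrable_on {0<..} \<and>
             integral {0<..} (\<lambda>t. \<bar>- exp (-t)\<bar> *\<^sub>R F (exp (-t))) = target"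
  proof
    show "(\<lambda>t. \<bar>- exp (-t)\<bar> *\<^sub>R F (exp (-t))) absolutely_integrable_on {0<..}"
      by (rule absolutely_integrable_spike[OF G_int(1) negligible_empty])
         (simp only: F_def, rule pointwise, simp)
    have "integral {0<..} (\<lambda>t. \<bar>- exp (-t)\<bar> *\<^sub>R F (exp (-t))) = integral {0<..} G"
      by (rule integral_cong) (simp only: F_def, rule pointwise, simp)
    thus "integral {0<..} (\<lambda>t. \<bar>- exp (-t)\<bar> *\<^sub>R F (exp (-t))) = target"
      using integral_G by simp
  qed
  with cov img have Fi: "F absolutely_integrable_on {0<..<1}" and FI: "integral {0<..<1} F = target"
    by auto
  have "(F has_integral integral {0<..<1} F) {0<..<1}"
    by (rule integrable_integral[OF set_lebesgue_integral_eq_integral(1)[OF Fi]])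
  hence "(F has_integral target) {0<..<1}" by (simp only: FI)
  thus ?thesis unfolding target_def F_def .
qed


end
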